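(* Let $a\in A\subseteq\mathbf{R}^n$, $C\in\mathbf{R}$, and let $f:\mathbf{R}^n\to\mathcal{P}(\mathbf{R}^n)$ be a multivalued map such that $\Theta^n(\mathscr{L}^n\llcorner(\mathbf{R}^n\setminus A),a)=0$, $f(b)$ is a singleton for every $b\in A$, $f|A$ is differentiable at $a$, and $$|f(b)-y|\le C|b-c|\quad\text{whenever }b\in A,\ c\in\mathbf{R}^n,\ y\in f(c).$$ Then $f$ is strongly differentiable at $a$.
   Context: $\mathcal{P}(\mathbf{R}^n)$ is the power set. $\Theta^n(\mu,x)=\lim_{r\downarrow0}\mu(\mathbf{B}(x,r))/(\alpha(n)r^n)$ (Euclidean closed balls). For a multivalued $T$ and a set $A$, $T|A$ is the multivalued map equal to $T$ on $A$ and to $\varnothing$ off $A$; a singleton value is identified with its element. A multivalued map $T$ from $\mathbf{R}^n$ to $\mathbf{R}^m$ is differentiable at $a$ if $T(a)$ is a singleton and there exists a linear $L$ such that for every $\varepsilon>0$ there is $\delta>0$ with $|y-T(a)-L(x-a)|\le\varepsilon|x-a|$ whenever $|x-a|\le\delta$ and $y\in T(x)$; it is strongly differentiable at $a$ if it is differentiable at $a$ and such $L$ is unique. *)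

theory Defs
  imports "HOL-Analysis.Analysis"
begin

text \<open>Lebesgue outer measure (the paper's L^n is defined on all sets).\<close>
definition lebesgue_outer :: "'a::euclidean_space set \<Rightarrow> ennreal" where
  "lebesgue_outer E = (INF U \<in> {U \<in> sets lebesgue. E \<subseteq> U}. emeasure lebesgue U)"

definition density_restr_zero :: "'a::euclidean_space set \<Rightarrow> 'a \<Rightarrow> bool" where
  "density_restr_zero B x \<longleftrightarrow>
     ((\<lambda>r. enn2real (lebesgue_outer (cball x r \<inter> B)) /
            (unit_ball_vol (real DIM('a)) * r ^ DIM('a))) \<longlongrightarrow> 0) (at_right 0)"

definition mv_restrict :: "('a \<Rightarrow> 'b set) \<Rightarrow> 'a set \<Rightarrow> 'a \<Rightarrow> 'b set" where
  "mv_restrict T A = (\<lambda>x. if x \<in> A then T x else {})"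

definition mv_diff_with ::
  "('a::real_normed_vector \<Rightarrow> 'b::real_normed_vector set) \<Rightarrow> 'a \<Rightarrow> ('a \<Rightarrow> 'b) \<Rightarrow> bool" where
  "mv_diff_with T a L \<longleftrightarrow> (\<exists>v. T a = {v}) \<and> linear L \<and>
     (\<forall>\<epsilon>>0. \<exists>\<delta>>0. \<forall>x y. norm (x - a) \<le> \<delta> \<and> y \<in> T x \<longrightarrow>
        norm (y - the_elem (T a) - L (x - a)) \<le> \<epsilon> * norm (x - a))"

definition mv_differentiable ::
  "('a::real_normed_vector \<Rightarrow> 'b::real_normed_vector set) \<Rightarrow> 'a \<Rightarrow> bool" where
  "mv_differentiable T a \<longleftrightarrow> (\<exists>L. mv_diff_with T a L)"

definition mv_strongly_differentiable ::
  "('a::real_normed_vector \<Rightarrow> 'b::real_normed_vector set) \<Rightarrow> 'a \<Rightarrow> bool" where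
  "mv_strongly_differentiable T a \<longleftrightarrow> mv_differentiable T a \<and>
     (\<forall>L1 L2. mv_diff_with T a L1 \<and> mv_diff_with T a L2 \<longrightarrow> L1 = L2)"

end

theory Submission
  imports Defs
begin

lemma leb_ball: "emeasure lebesgue (ball (x::'a::euclidean_space) s) = emeasure lborel (ball x s)"
  by (simp add: emeasure_completion main_part_sets)

lemma leb_cball: "emeasure lebesgue (cball (x::'a::euclidean_space) s) = emeasure lborel (cball x s)"
  by (simp add: emeasure_completion main_part_sets)

lemma outer_ge:
  fixes x :: "'a::euclidean_space"
  assumes "ball x s \<subseteq> E" "s \<ge> 0"
  shows "ennreal (unit_ball_vol (real DIM('a)) * s ^ DIM('a)) \<le> lebesgue_outer E"
  unfolding lebesgue_outer_def
proof (rule INF_greatest)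
  fix U assume U: "U \<in> {U \<in> sets lebesgue. E \<subseteq> U}"
  have "ennreal (unit_ball_vol (real DIM('a)) * s ^ DIM('a)) = emeasure lebesgue (ball x s)"
    using emeasure_ball[OF assms(2), of x] by (simp add: leb_ball)
  also have "\<dots> \<le> emeasure lebesgue U"
    using U assms(1) by (intro emeasure_mono) auto
  finally show "ennreal (unit_ball_vol (real DIM('a)) * s ^ DIM('a)) \<le> emeasure lebesgue U" .
qed

lemma outer_le:
  fixes x :: "'a::euclidean_space"
  assumes "E \<subseteq> cball x s" "s \<ge> 0"
  shows "lebesgue_outer E \<le> ennreal (unit_ball_vol (real DIM('a)) * s ^ DIM('a))"
proof -
  have "lebesgue_outer E \<le> emeasure lebesgue (cball x s)"
    unfolding lebesgue_outer_def using assms(1) by (intro INF_lower) auto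
  also have "\<dots> = ennreal (unit_ball_vol (real DIM('a)) * s ^ DIM('a))"
    using emeasure_cball[OF assms(2), of x] by (simp add: leb_cball)
  finally show ?thesis .
qed

lemma near:
  fixes A :: "'a::euclidean_space set"
  assumes aA: "a \<in> A" and dens: "density_restr_zero (UNIV - A) a" and ep: "\<epsilon> > 0"
  shows "\<exists>\<delta>>0. \<forall>x. norm (x - a) \<le> \<delta> \<longrightarrow> (\<exists>b\<in>A. norm (b - x) \<le> \<epsilon> * norm (x - a))"
proof -
  define e where "e = min \<epsilon> 1"
  have e: "e > 0" "e \<le> 1" "e \<le> \<epsilon>" using ep by (auto simp: e_def)
  define n where "n = DIM('a)"
  define V where "V = unit_ball_vol (real DIM('a))"
  have V: "V > 0" by (simp add: V_def)
  define g where "g = (\<lambda>r. enn2real (lebesgue_outer (cball a r \<inter> (UNIV - A))) /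
            (unit_ball_vol (real DIM('a)) * r ^ DIM('a)))"
  have "(g \<longlongrightarrow> 0) (at_right 0)" using dens unfolding density_restr_zero_def g_def .
  moreover have "(0::real) < (e/2)^n" using e by simp
  ultimately have "eventually (\<lambda>r. g r < (e/2)^n) (at_right 0)"
    by (rule order_tendstoD(2))
  then obtain d where d: "d > 0" "\<And>r. r > 0 \<Longrightarrow> r < d \<Longrightarrow> g r < (e/2)^n"
    unfolding eventually_at_right_field by auto
  show ?thesis
  proof (intro exI[of _ "d/3"] conjI allI impI)
    show "d/3 > 0" using d by simp
    fix x assume x: "norm (x - a) \<le> d/3"
    define r where "r = norm (x - a)"
    show "\<exists>b\<in>A. norm (b - x) \<le> \<epsilon> * norm (x - a)"
    proof (cases "r = 0")
      case True
      then show ?thesis using aA by (intro bexI[of _ a]) (auto simp: r_def)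
    next
      case False
      then have r: "r > 0" by (simp add: r_def)
      show ?thesis
      proof (rule ccontr)
        assume "\<not> ?thesis"
        then have far: "\<And>b. b \<in> A \<Longrightarrow> norm (b - x) > e * r"
          using e r_def by (smt (verit, best) mult_right_mono norm_ge_zero)
        have sub1: "ball x (e*r) \<subseteq> cball a (2*r) \<inter> (UNIV - A)"
        proof
          fix z assume z: "z \<in> ball x (e*r)"
          then have "dist x z < e * r" by simp
          then have "norm (z - x) < e*r" by (simp add: dist_norm norm_minus_commute)
          moreover have "e * r \<le> r" using e r by simp
          ultimately have "norm (z - a) \<le> 2*r"
            using norm_triangle_ineq[of "z - x" "x - a"] r_def by simp
          moreover have "z \<notin> A" using far \<open>norm (z - x) < e*r\<close> by force
          ultimately show "z \<in> cball a (2*r) \<inter> (UNIV - A)"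
            by (simp add: dist_norm norm_minus_commute)
        qed
        have lo: "ennreal (V * (e*r) ^ n) \<le> lebesgue_outer (cball a (2*r) \<inter> (UNIV - A))"
          unfolding V_def n_def by (rule outer_ge[OF sub1]) (use e r in simp)
        have hi: "lebesgue_outer (cball a (2*r) \<inter> (UNIV - A)) \<le> ennreal (V * (2*r) ^ n)"
          unfolding V_def n_def by (rule outer_le) (use r in auto)
        have "V * (e*r) ^ n \<le> enn2real (lebesgue_outer (cball a (2*r) \<inter> (UNIV - A)))"
        proof -
          have "enn2real (ennreal (V * (e*r) ^ n)) \<le> enn2real (lebesgue_outer (cball a (2*r) \<inter> (UNIV - A)))"
            using lo hi by (intro enn2real_mono) (auto simp: le_less_trans)
          then show ?thesis using V e r by simp
        qed
        moreover have eq: "unit_ball_vol (real DIM('a)) * (2*r)^DIM('a) = V*(2*r)^n"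
          by (simp add: V_def n_def)
        ultimately have "V * (e*r) ^ n / (V * (2*r)^n) \<le> g (2*r)"
          unfolding g_def eq using V r by (intro divide_right_mono) auto
        also have "V * (e*r) ^ n / (V * (2*r)^n) = (e/2)^n"
          using V r by (simp add: power_mult_distrib power_divide)
        finally have "(e/2)^n \<le> g (2*r)" .
        moreover have "2*r < d" using r x unfolding r_def by linarith
        then have "g (2*r) < (e/2)^n" using r by (intro d(2)) auto
        ultimately show False by simp
      qed
    qed
  qed
qed

lemma uniq:
  fixes f :: "'a::euclidean_space \<Rightarrow> 'b::real_normed_vector set"
  assumes aA: "a \<in> A" and dens: "density_restr_zero (UNIV - A) a"
    and ne: "\<forall>b\<in>A. f b \<noteq> {}"
    and d1: "mv_diff_with f a L1" and d2: "mv_diff_with f a L2"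
  shows "L1 = L2"
proof -
  obtain v where v: "f a = {v}" using d1 unfolding mv_diff_with_def by auto
  have l1: "linear L1" and l2: "linear L2" using d1 d2 unfolding mv_diff_with_def by auto
  define D where "D = (\<lambda>x. L1 x - L2 x)"
  have lD: "linear D" unfolding D_def using l1 l2 by (rule linear_compose_sub)
  obtain K where K: "K > 0" "\<And>x. norm (D x) \<le> norm x * K"
    using linear_bounded_pos[OF lD] by (metis mult.commute)
  have claim: "norm (D u) \<le> (4+K)*\<epsilon>*norm u" if ep: "\<epsilon> > 0" "\<epsilon> \<le> 1" for u \<epsilon>
  proof (cases "u = 0")
    case True then show ?thesis using linear_0[OF lD] by simp
  next
    case False
    then have nu: "norm u > 0" by simp
    obtain \<delta>1 where \<delta>1: "\<delta>1 > 0" "\<And>x y. norm (x - a) \<le> \<delta>1 \<Longrightarrow> y \<in> f x \<Longrightarrow>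
        norm (y - the_elem (f a) - L1 (x - a)) \<le> \<epsilon> * norm (x - a)"
      using d1 ep unfolding mv_diff_with_def by meson
    obtain \<delta>2 where \<delta>2: "\<delta>2 > 0" "\<And>x y. norm (x - a) \<le> \<delta>2 \<Longrightarrow> y \<in> f x \<Longrightarrow>
        norm (y - the_elem (f a) - L2 (x - a)) \<le> \<epsilon> * norm (x - a)"
      using d2 ep unfolding mv_diff_with_def by meson
    obtain \<delta>3 where \<delta>3: "\<delta>3 > 0" "\<And>x. norm (x - a) \<le> \<delta>3 \<Longrightarrow> (\<exists>b\<in>A. norm (b - x) \<le> \<epsilon> * norm (x - a))"
      using near[OF aA dens ep(1)] by blast
    define m where "m = min \<delta>1 (min \<delta>2 \<delta>3)"
    have m: "m > 0" "m \<le> \<delta>1" "m \<le> \<delta>2" "m \<le> \<delta>3" using \<delta>1 \<delta>2 \<delta>3 by (auto simp: m_def)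
    define t where "t = m / (2 * norm u)"
    have t: "t > 0" using m nu by (simp add: t_def)
    define x where "x = a + t *\<^sub>R u"
    have nx: "norm (x - a) = m/2" using t nu m(1) by (simp add: x_def t_def)
    obtain b where b: "b \<in> A" "norm (b - x) \<le> \<epsilon> * (m/2)"
      using \<delta>3(2)[of x] nx m by auto
    have tri: "norm (b - a) \<le> norm (b - x) + norm (x - a)"
      using norm_triangle_ineq[of "b - x" "x - a"] by simp
    have "\<epsilon> * (m/2) \<le> m/2" using ep m by (simp add: mult_left_le_one_le)
    then have nb: "norm (b - a) \<le> m" using tri b(2) nx by linarith
    obtain y where y: "y \<in> f b" using ne b by auto
    have e1: "norm (y - v - L1 (b - a)) \<le> \<epsilon> * norm (b - a)"
      using \<delta>1(2)[OF _ y] nb m v by simp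
    have e2: "norm (y - v - L2 (b - a)) \<le> \<epsilon> * norm (b - a)"
      using \<delta>2(2)[OF _ y] nb m v by simp
    have eqD: "D (b - a) = (y - v - L2 (b - a)) - (y - v - L1 (b - a))" by (simp add: D_def)
    have tri2: "norm (D (b - a)) \<le> norm (y - v - L2 (b - a)) + norm (y - v - L1 (b - a))"
      unfolding eqD by (rule norm_triangle_ineq4)
    have "\<epsilon> * norm (b - a) \<le> \<epsilon> * m" using nb ep by (simp add: mult_left_mono)
    then have ba: "norm (D (b - a)) \<le> 2 * \<epsilon> * m" using tri2 e1 e2 by linarith
    have bx: "norm (D (b - x)) \<le> \<epsilon> * (m/2) * K"
      using K(2)[of "b - x"] mult_right_mono[OF b(2), of K] K(1) by linarith
    have eqx: "D (x - a) = D (b - a) - D (b - x)"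
      using linear_diff[OF lD, of "b - a" "b - x"] by simp
    have "norm (D (x - a)) \<le> norm (D (b - a)) + norm (D (b - x))"
      unfolding eqx by (rule norm_triangle_ineq4)
    also have "\<dots> \<le> (4 + K) * \<epsilon> * (m/2)" using ba bx by (simp add: algebra_simps)
    finally have "norm (D (x - a)) \<le> (4 + K) * \<epsilon> * (m/2)" .
    moreover have "D (x - a) = t *\<^sub>R D u" using linear_scale[OF lD] by (simp add: x_def)
    moreover have "m/2 = t * norm u" using nu by (simp add: t_def)
    ultimately have "t * norm (D u) \<le> t * ((4 + K) * \<epsilon> * norm u)"
      using t by (simp add: algebra_simps)
    then show ?thesis using t by simp
  qed
  have "D u = 0" for u
  proof (rule ccontr)
    assume nz: "D u \<noteq> 0"
    then have nD: "norm (D u) > 0" by simp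
    have "u \<noteq> 0" using nz linear_0[OF lD] by auto
    then have nu: "norm u > 0" by simp
    define \<epsilon> where "\<epsilon> = min 1 (norm (D u) / ((5+K) * norm u))"
    have ep: "\<epsilon> > 0" "\<epsilon> \<le> 1" using nD nu K by (auto simp: \<epsilon>_def)
    have "(4+K)*\<epsilon>*norm u \<le> (4+K) * (norm (D u) / ((5+K) * norm u)) * norm u"
      using K nu by (intro mult_right_mono mult_left_mono) (auto simp: \<epsilon>_def)
    also have "\<dots> = (4+K)/(5+K) * norm (D u)"
    proof -
      have "norm (D u) / ((5+K) * norm u) * norm u = norm (D u) / (5+K)" using nu by simp
      then show ?thesis by (metis mult.assoc times_divide_eq_left times_divide_eq_right mult.commute)
    qed
    also have "\<dots> < norm (D u)" using nD K by (simp add: field_simps)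
    finally show False using claim[OF ep, of u] by simp
  qed
  then show ?thesis unfolding D_def by (intro ext) simp
qed

theorem lemma2p38:
  fixes f :: "'a::euclidean_space \<Rightarrow> 'a set"
    and A :: "'a set" and a :: 'a and C :: real
  assumes "a \<in> A"
    and "density_restr_zero (UNIV - A) a"
    and "\<forall>b\<in>A. \<exists>v. f b = {v}"
    and "mv_differentiable (mv_restrict f A) a"
    and "\<forall>b\<in>A. \<forall>c y. y \<in> f c \<longrightarrow> norm (the_elem (f b) - y) \<le> C * norm (b - c)"
  shows "mv_strongly_differentiable f a"
proof -
  note aA = assms(1) and dens = assms(2) and sing = assms(3) and lip = assms(5)
  obtain L where dL: "mv_diff_with (mv_restrict f A) a L"
    using assms(4) unfolding mv_differentiable_def by blast
  obtain v where v: "f a = {v}" using sing aA by blast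
  have rA: "mv_restrict f A a = {v}" using v aA by (simp add: mv_restrict_def)
  have lL: "linear L" using dL unfolding mv_diff_with_def by blast
  obtain K where K: "K > 0" "\<And>x. norm (L x) \<le> norm x * K"
    using linear_bounded_pos[OF lL] by (metis mult.commute)
  have dfL: "mv_diff_with f a L"
    unfolding mv_diff_with_def
  proof (intro conjI allI impI)
    show "\<exists>v. f a = {v}" using v by blast
    show "linear L" by (rule lL)
    fix \<epsilon> :: real assume ep: "\<epsilon> > 0"
    define Q where "Q = 3 + \<bar>C\<bar> + K"
    have Q: "Q > 0" using K by (simp add: Q_def)
    define \<eta> where "\<eta> = min 1 (\<epsilon> / Q)"
    have et: "\<eta> > 0" "\<eta> \<le> 1" "\<eta> \<le> \<epsilon> / Q" using ep Q by (auto simp: \<eta>_def)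
    obtain \<delta>1 where \<delta>1: "\<delta>1 > 0" "\<And>x y. norm (x - a) \<le> \<delta>1 \<Longrightarrow> y \<in> mv_restrict f A x \<Longrightarrow>
        norm (y - the_elem (mv_restrict f A a) - L (x - a)) \<le> \<eta> * norm (x - a)"
      using dL et(1) unfolding mv_diff_with_def by meson
    obtain \<delta>3 where \<delta>3: "\<delta>3 > 0" "\<And>x. norm (x - a) \<le> \<delta>3 \<Longrightarrow> (\<exists>b\<in>A. norm (b - x) \<le> \<eta> * norm (x - a))"
      using near[OF aA dens et(1)] by blast
    show "\<exists>\<delta>>0. \<forall>x y. norm (x - a) \<le> \<delta> \<and> y \<in> f x \<longrightarrow>
        norm (y - the_elem (f a) - L (x - a)) \<le> \<epsilon> * norm (x - a)"
    proof (intro exI[of _ "min (\<delta>1/2) \<delta>3"] conjI allI impI)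
      show "min (\<delta>1/2) \<delta>3 > 0" using \<delta>1 \<delta>3 by simp
      fix x y assume xy: "norm (x - a) \<le> min (\<delta>1/2) \<delta>3 \<and> y \<in> f x"
      define r where "r = norm (x - a)"
      have r0: "r \<ge> 0" by (simp add: r_def)
      obtain b where b: "b \<in> A" "norm (b - x) \<le> \<eta> * r"
        using \<delta>3(2)[of x] xy r_def by auto
      have tri: "norm (b - a) \<le> norm (b - x) + norm (x - a)"
        using norm_triangle_ineq[of "b - x" "x - a"] by simp
      have "\<eta> * r \<le> r" using et r0 by (simp add: mult_left_le_one_le)
      then have nb: "norm (b - a) \<le> 2 * r" using tri b(2) r_def by linarith
      then have nb1: "norm (b - a) \<le> \<delta>1" using xy r_def by linarith
      obtain z where z: "f b = {z}" using sing b(1) by blast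
      have zr: "z \<in> mv_restrict f A b" using z b(1) by (simp add: mv_restrict_def)
      have e1: "norm (z - v - L (b - a)) \<le> \<eta> * norm (b - a)"
        using \<delta>1(2)[OF nb1 zr] rA by simp
      have "\<eta> * norm (b - a) \<le> \<eta> * (2 * r)" using nb et by (simp add: mult_left_mono)
      with e1 have e1': "norm (z - v - L (b - a)) \<le> 2 * (\<eta> * r)" by linarith
      have "norm (z - y) \<le> C * norm (b - x)" using lip b(1) xy z by fastforce
      also have "\<dots> \<le> \<bar>C\<bar> * norm (b - x)" by (simp add: mult_right_mono)
      also have "\<dots> \<le> \<bar>C\<bar> * (\<eta> * r)" using b(2) by (simp add: mult_left_mono)
      finally have e2: "norm (z - y) \<le> \<bar>C\<bar> * (\<eta> * r)" .
      have "K * norm (b - x) \<le> K * (\<eta> * r)" using b(2) K(1) by (simp add: mult_left_mono)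
      then have e3: "norm (L (b - x)) \<le> K * (\<eta> * r)"
        using K(2)[of "b - x"] by (simp add: mult.commute)
      have eqL: "L (x - a) = L (b - a) - L (b - x)"
        using linear_diff[OF lL, of "b - a" "b - x"] by simp
      have eq: "y - v - L (x - a) = (z - v - L (b - a)) - (z - y) + L (b - x)"
        unfolding eqL by (simp add: algebra_simps)
      have "norm (y - v - L (x - a)) \<le> norm (z - v - L (b - a)) + norm (z - y) + norm (L (b - x))"
        unfolding eq by (meson norm_triangle_ineq norm_triangle_ineq4 order_trans add_right_mono)
      also have "\<dots> \<le> (2 + \<bar>C\<bar> + K) * (\<eta> * r)" using e1' e2 e3 by (simp add: algebra_simps)
      also have "\<dots> \<le> Q * (\<eta> * r)" using et r0 by (intro mult_right_mono) (auto simp: Q_def)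
      also have "Q * (\<eta> * r) \<le> Q * (\<epsilon> / Q * r)"
        using Q et r0 by (intro mult_left_mono mult_right_mono) auto
      also have "\<dots> = \<epsilon> * r" using Q by simp
      finally show "norm (y - the_elem (f a) - L (x - a)) \<le> \<epsilon> * norm (x - a)"
        using v r_def by simp
    qed
  qed
  have ne: "\<forall>b\<in>A. f b \<noteq> {}" using sing by auto
  show ?thesis
    unfolding mv_strongly_differentiable_def mv_differentiable_def
    using dfL uniq[OF aA dens ne] by blast
qed

end
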